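(* Let $G=(V,E)$ be a finite weakly connected directed multigraph (loops allowed) in which every vertex has even degree, and let $M=(M_e)_{e\in E}$ with $M_e\in M_n(\mathbb C)$. Then $$|T_G(M)|\le n\prod_{e\in E}\|M_e\|.$$ Moreover, if $f\in E$ and $M_f$ has rank $r$, then $$|T_G(M)|\le\sqrt{rn}\prod_{e\in E}\|M_e\|.$$
   Context: A directed multigraph $G=(V,E)$ consists of finite sets $V,E$ and maps $e\mapsto e_-$ (origin) and $e\mapsto e_+$ (terminus) from $E$ to $V$; $e_-=e_+$ is allowed. Weakly connected means connected after forgetting orientations. The degree of $v$ is $\deg(v)=\sum_{e\in E}(\mathbf 1(v=e_-)+\mathbf 1(v=e_+))$. For $M=(M_e)_{e\in E}$, $$T_G(M)=\sum_{\mathbf i=(i_v)_{v\in V}\in\{1,\dots,n\}^V}\ \prod_{e\in E}(M_e)_{i_{e_-}i_{e_+}}.$$ $\|\cdot\|$ is the operator norm. *)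

theory Defs
  imports "HOL-Analysis.Analysis"
begin

definition dgraph :: "'v set \<Rightarrow> 'e set \<Rightarrow> ('e \<Rightarrow> 'v) \<Rightarrow> ('e \<Rightarrow> 'v) \<Rightarrow> bool" where
  "dgraph V E src tgt \<longleftrightarrow> finite V \<and> finite E \<and> (\<forall>e\<in>E. src e \<in> V \<and> tgt e \<in> V)"

definition weakly_connected :: "'v set \<Rightarrow> 'e set \<Rightarrow> ('e \<Rightarrow> 'v) \<Rightarrow> ('e \<Rightarrow> 'v) \<Rightarrow> bool" where
  "weakly_connected V E src tgt \<longleftrightarrow>
     (\<forall>u\<in>V. \<forall>w\<in>V. (u, w) \<in> ({(src e, tgt e) | e. e \<in> E} \<union> {(tgt e, src e) | e. e \<in> E})\<^sup>*)"

definition degree :: "'e set \<Rightarrow> ('e \<Rightarrow> 'v) \<Rightarrow> ('e \<Rightarrow> 'v) \<Rightarrow> 'v \<Rightarrow> nat" where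
  "degree E src tgt v = (\<Sum>e\<in>E. (if v = src e then 1 else 0) + (if v = tgt e then 1 else 0))"

definition graph_trace ::
  "'v set \<Rightarrow> 'e set \<Rightarrow> ('e \<Rightarrow> 'v) \<Rightarrow> ('e \<Rightarrow> 'v) \<Rightarrow> ('e \<Rightarrow> complex^'n::finite^'n) \<Rightarrow> complex" where
  "graph_trace V E src tgt M =
     (\<Sum>i\<in>(V \<rightarrow>\<^sub>E (UNIV :: 'n set)). \<Prod>e\<in>E. (M e) $ (i (src e)) $ (i (tgt e)))"

definition opnorm :: "complex^'n::finite^'n \<Rightarrow> real" where
  "opnorm A = onorm (\<lambda>x. A *v x)"

end

theory Submission
  imports Defs
begin

lemma sum_PiE_insert:
  fixes F :: "('v \<Rightarrow> 'n::finite) \<Rightarrow> 'a::comm_monoid_add"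
  assumes "finite S" "v \<notin> S"
  shows "(\<Sum>\<sigma>\<in>insert v S \<rightarrow>\<^sub>E (UNIV::'n set). F \<sigma>) = (\<Sum>\<sigma>\<in>S \<rightarrow>\<^sub>E UNIV. \<Sum>c\<in>UNIV. F (\<sigma>(v:=c)))"
proof -
  have "(\<Sum>\<sigma>\<in>insert v S \<rightarrow>\<^sub>E (UNIV::'n set). F \<sigma>) = (\<Sum>x\<in>UNIV \<times> (S \<rightarrow>\<^sub>E UNIV). F ((\<lambda>(y, g). g(v := y)) x))"
    unfolding PiE_insert_eq
    by (subst sum.reindex) (use inj_combinator[OF assms(2)] in auto)
  also have "\<dots> = (\<Sum>c\<in>UNIV. \<Sum>\<sigma>\<in>S \<rightarrow>\<^sub>E UNIV. F (\<sigma>(v:=c)))"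
    by (simp add: sum.cartesian_product case_prod_unfold)
  also have "\<dots> = (\<Sum>\<sigma>\<in>S \<rightarrow>\<^sub>E UNIV. \<Sum>c\<in>UNIV. F (\<sigma>(v:=c)))"
    by (rule sum.swap)
  finally show ?thesis .
qed

lemma cs_complex:
  fixes a b :: "'i \<Rightarrow> complex"
  shows "(cmod (\<Sum>i\<in>I. a i * b i))\<^sup>2 \<le> (\<Sum>i\<in>I. (cmod (a i))\<^sup>2) * (\<Sum>i\<in>I. (cmod (b i))\<^sup>2)"
proof -
  have "cmod (\<Sum>i\<in>I. a i * b i) \<le> (\<Sum>i\<in>I. cmod (a i) * cmod (b i))"
    using norm_sum[of "\<lambda>i. a i * b i" I] by (simp add: norm_mult)
  hence "(cmod (\<Sum>i\<in>I. a i * b i))\<^sup>2 \<le> (\<Sum>i\<in>I. cmod (a i) * cmod (b i))\<^sup>2"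
    by (simp add: power_mono)
  also have "\<dots> \<le> (\<Sum>i\<in>I. (cmod (a i))\<^sup>2) * (\<Sum>i\<in>I. (cmod (b i))\<^sup>2)"
    by (rule Cauchy_Schwarz_ineq_sum)
  finally show ?thesis .
qed

definition nrm :: "'v set \<Rightarrow> (('v \<Rightarrow> 'n::finite) \<Rightarrow> complex) \<Rightarrow> real" where
  "nrm S g = (\<Sum>\<sigma>\<in>S \<rightarrow>\<^sub>E UNIV. (cmod (g \<sigma>))\<^sup>2)"

definition dep :: "'v set \<Rightarrow> (('v \<Rightarrow> 'n) \<Rightarrow> complex) \<Rightarrow> bool" where
  "dep S g \<longleftrightarrow> (\<forall>\<sigma> \<tau>. (\<forall>v\<in>S. \<sigma> v = \<tau> v) \<longrightarrow> g \<sigma> = g \<tau>)"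

definition bnd :: "real \<Rightarrow> ('n::finite \<Rightarrow> 'n \<Rightarrow> complex) \<Rightarrow> bool" where
  "bnd c B \<longleftrightarrow> 0 \<le> c \<and> (\<forall>x. (\<Sum>p\<in>UNIV. (cmod (\<Sum>q\<in>UNIV. B p q * x q))\<^sup>2) \<le> c\<^sup>2 * (\<Sum>q\<in>UNIV. (cmod (x q))\<^sup>2))"

lemma bnd_col:
  assumes "bnd c B" shows "(\<Sum>p\<in>UNIV. (cmod (B p q))\<^sup>2) \<le> c\<^sup>2"
proof -
  have "(\<Sum>p\<in>UNIV. (cmod (\<Sum>q'\<in>UNIV. B p q' * (if q' = q then 1 else 0)))\<^sup>2)
     \<le> c\<^sup>2 * (\<Sum>q'\<in>UNIV. (cmod (if q' = q then 1 else 0::complex))\<^sup>2)"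
    using conjunct2[OF assms[unfolded bnd_def], rule_format, of "\<lambda>q'. if q' = q then 1 else 0"] .
  moreover have "(\<Sum>q'\<in>UNIV. (cmod (if q' = q then 1 else 0::complex))\<^sup>2) = 1"
    by (subst sum.cong[OF refl, of _ _ "\<lambda>q'. if q' = q then 1 else 0"]) auto
  moreover have "\<And>p. (\<Sum>q'\<in>UNIV. B p q' * (if q' = q then 1 else 0)) = B p q"
    by (simp add: if_distrib cong: if_cong)
  ultimately show ?thesis by simp
qed

lemma bnd_transpose:
  assumes "bnd c B" shows "bnd c (\<lambda>p q. B q p)"
  unfolding bnd_def
proof (intro conjI allI)
  show "0 \<le> c" using assms by (simp add: bnd_def)
  fix y :: "'a \<Rightarrow> complex"
  define z where "z p = (\<Sum>q\<in>UNIV. B q p * y q)" for p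
  define Z where "Z = (\<Sum>p\<in>UNIV. (cmod (z p))\<^sup>2)"
  define Y where "Y = (\<Sum>q\<in>UNIV. (cmod (y q))\<^sup>2)"
  have Z0: "Z \<ge> 0" "Y \<ge> 0" unfolding Z_def Y_def by (auto intro: sum_nonneg)
  have "of_real Z = (\<Sum>p\<in>UNIV. cnj (z p) * z p)"
    unfolding Z_def of_real_sum complex_norm_square by (simp add: mult.commute)
  also have "\<dots> = (\<Sum>p\<in>UNIV. \<Sum>q\<in>UNIV. cnj (z p) * (B q p * y q))"
    unfolding z_def by (simp add: sum_distrib_left)
  also have "\<dots> = (\<Sum>q\<in>UNIV. y q * (\<Sum>p\<in>UNIV. B q p * cnj (z p)))"
    by (subst sum.swap) (simp add: sum_distrib_left mult_ac)
  finally have eq: "of_real Z = (\<Sum>q\<in>UNIV. y q * (\<Sum>p\<in>UNIV. B q p * cnj (z p)))" .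
  have "Z\<^sup>2 = (cmod (of_real Z))\<^sup>2" using Z0 by simp
  also have "\<dots> \<le> Y * (\<Sum>q\<in>UNIV. (cmod (\<Sum>p\<in>UNIV. B q p * cnj (z p)))\<^sup>2)"
    unfolding eq Y_def by (rule cs_complex)
  also have "\<dots> \<le> Y * (c\<^sup>2 * Z)"
  proof -
    have "(\<Sum>q\<in>UNIV. (cmod (\<Sum>p\<in>UNIV. B q p * cnj (z p)))\<^sup>2) \<le> c\<^sup>2 * (\<Sum>p\<in>UNIV. (cmod (cnj (z p)))\<^sup>2)"
      using conjunct2[OF assms[unfolded bnd_def], rule_format, of "\<lambda>p. cnj (z p)"] by simp
    thus ?thesis using Z0 by (simp add: Z_def mult_left_mono)
  qed
  finally have "Z\<^sup>2 \<le> Y * (c\<^sup>2 * Z)" .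
  hence "Z \<le> c\<^sup>2 * Y"
  proof (cases "Z = 0")
    case True thus ?thesis using Z0 by simp
  next
    case False
    hence "Z > 0" using Z0 by simp
    with \<open>Z\<^sup>2 \<le> Y * (c\<^sup>2 * Z)\<close> show ?thesis
      by (simp add: power2_eq_square mult_ac)
  qed
  thus "(\<Sum>p\<in>UNIV. (cmod (\<Sum>q\<in>UNIV. B q p * y q))\<^sup>2) \<le> c\<^sup>2 * (\<Sum>q\<in>UNIV. (cmod (y q))\<^sup>2)"
    unfolding Z_def Y_def z_def .
qed

lemma bnd_row:
  assumes "bnd c B" shows "(\<Sum>q\<in>UNIV. (cmod (B p q))\<^sup>2) \<le> c\<^sup>2"
  using bnd_col[OF bnd_transpose[OF assms]] by simp

lemma bnd_entry:
  assumes "bnd c B" shows "cmod (B p q) \<le> c"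
proof -
  have "(cmod (B p q))\<^sup>2 \<le> (\<Sum>p\<in>UNIV. (cmod (B p q))\<^sup>2)"
    by (rule member_le_sum) auto
  also have "\<dots> \<le> c\<^sup>2" by (rule bnd_col[OF assms])
  finally show ?thesis using assms unfolding bnd_def
    using power2_le_imp_le by blast
qed



lemma nrm_insert:
  assumes "finite S" "v \<notin> S"
  shows "nrm (insert v S) g = (\<Sum>\<rho>\<in>S \<rightarrow>\<^sub>E UNIV. \<Sum>c\<in>UNIV. (cmod (g (\<rho>(v:=c))))\<^sup>2)"
  unfolding nrm_def by (rule sum_PiE_insert[OF assms])

lemma step_N1:
  fixes B :: "'n::finite \<Rightarrow> 'n \<Rightarrow> complex" and g :: "('v \<Rightarrow> 'n) \<Rightarrow> complex"
  assumes "finite S" "v \<notin> S" "bnd c B"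
  shows "nrm S (\<lambda>\<sigma>. \<Sum>d\<in>UNIV. B (\<sigma> u) d * g (\<sigma>(v:=d))) \<le> c\<^sup>2 * nrm (insert v S) g"
proof -
  have "nrm S (\<lambda>\<sigma>. \<Sum>d\<in>UNIV. B (\<sigma> u) d * g (\<sigma>(v:=d)))
      \<le> (\<Sum>\<rho>\<in>S \<rightarrow>\<^sub>E UNIV. c\<^sup>2 * (\<Sum>d\<in>UNIV. (cmod (g (\<rho>(v:=d))))\<^sup>2))"
    unfolding nrm_def
  proof (rule sum_mono)
    fix \<rho> :: "'v \<Rightarrow> 'n"
    have "(cmod (\<Sum>d\<in>UNIV. B (\<rho> u) d * g (\<rho>(v:=d))))\<^sup>2
        \<le> (\<Sum>d\<in>UNIV. (cmod (B (\<rho> u) d))\<^sup>2) * (\<Sum>d\<in>UNIV. (cmod (g (\<rho>(v:=d))))\<^sup>2)"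
      by (rule cs_complex)
    also have "\<dots> \<le> c\<^sup>2 * (\<Sum>d\<in>UNIV. (cmod (g (\<rho>(v:=d))))\<^sup>2)"
      by (rule mult_right_mono[OF bnd_row[OF assms(3)]]) (auto intro: sum_nonneg)
    finally show "(cmod (\<Sum>d\<in>UNIV. B (\<rho> u) d * g (\<rho>(v:=d))))\<^sup>2
        \<le> c\<^sup>2 * (\<Sum>d\<in>UNIV. (cmod (g (\<rho>(v:=d))))\<^sup>2)" .
  qed
  also have "\<dots> = c\<^sup>2 * nrm (insert v S) g"
    by (simp add: nrm_insert[OF assms(1,2)] sum_distrib_left)
  finally show ?thesis .
qed

lemma step_N2:
  fixes B :: "'n::finite \<Rightarrow> 'n \<Rightarrow> complex" and g :: "('v \<Rightarrow> 'n) \<Rightarrow> complex"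
  assumes "finite S" "u \<in> S" "v \<notin> S" "bnd c B" "dep (insert v (S - {u})) g"
  shows "nrm S (\<lambda>\<sigma>. \<Sum>d\<in>UNIV. B (\<sigma> u) d * g (\<sigma>(v:=d))) \<le> c\<^sup>2 * nrm (insert v (S - {u})) g"
proof -
  have S: "S = insert u (S - {u})" using assms(2) by auto
  have fin: "finite (S - {u})" using assms(1) by auto
  have vu: "v \<noteq> u" using assms(2,3) by auto
  have gi: "g (\<rho>(u:=p, v:=d)) = g (\<rho>(v:=d))" for \<rho> p d
  proof -
    have "\<forall>w\<in>insert v (S - {u}). (\<rho>(u:=p, v:=d)) w = (\<rho>(v:=d)) w" by auto
    thus ?thesis using assms(5) unfolding dep_def by blast
  qed
  have "nrm S (\<lambda>\<sigma>. \<Sum>d\<in>UNIV. B (\<sigma> u) d * g (\<sigma>(v:=d)))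
     = (\<Sum>\<rho>\<in>(S - {u}) \<rightarrow>\<^sub>E UNIV. \<Sum>p\<in>UNIV. (cmod (\<Sum>d\<in>UNIV. B p d * g (\<rho>(v:=d))))\<^sup>2)"
    by (subst S, subst nrm_insert[OF fin]) (auto simp: gi vu)
  also have "\<dots> \<le> (\<Sum>\<rho>\<in>(S - {u}) \<rightarrow>\<^sub>E UNIV. c\<^sup>2 * (\<Sum>d\<in>UNIV. (cmod (g (\<rho>(v:=d))))\<^sup>2))"
    by (rule sum_mono) (use assms(4) in \<open>auto simp: bnd_def\<close>)
  also have "\<dots> = c\<^sup>2 * nrm (insert v (S - {u})) g"
    using assms(3) by (simp add: nrm_insert[OF fin] sum_distrib_left)
  finally show ?thesis .
qed

lemma step_O1:
  fixes B :: "'n::finite \<Rightarrow> 'n \<Rightarrow> complex" and g :: "('v \<Rightarrow> 'n) \<Rightarrow> complex"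
  assumes "bnd c B"
  shows "nrm S (\<lambda>\<sigma>. B (\<sigma> u) (\<sigma> v) * g \<sigma>) \<le> c\<^sup>2 * nrm S g"
  unfolding nrm_def sum_distrib_left
proof (rule sum_mono)
  fix \<sigma> :: "'v \<Rightarrow> 'n"
  have "cmod (B (\<sigma> u) (\<sigma> v)) \<le> c" by (rule bnd_entry[OF assms])
  hence "(cmod (B (\<sigma> u) (\<sigma> v)))\<^sup>2 \<le> c\<^sup>2" by (simp add: power_mono)
  thus "(cmod (B (\<sigma> u) (\<sigma> v) * g \<sigma>))\<^sup>2 \<le> c\<^sup>2 * (cmod (g \<sigma>))\<^sup>2"
    by (simp add: norm_mult power_mult_distrib mult_right_mono)
qed

lemma step_O2:
  fixes B :: "'n::finite \<Rightarrow> 'n \<Rightarrow> complex" and g :: "('v \<Rightarrow> 'n) \<Rightarrow> complex"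
  assumes "finite S" "u \<in> S" "u \<noteq> v" "bnd c B" "dep (S - {u}) g"
  shows "nrm S (\<lambda>\<sigma>. B (\<sigma> u) (\<sigma> v) * g \<sigma>) \<le> c\<^sup>2 * nrm (S - {u}) g"
proof -
  have S: "S = insert u (S - {u})" using assms(2) by auto
  have fin: "finite (S - {u})" using assms(1) by auto
  have gi: "g (\<rho>(u:=p)) = g \<rho>" for \<rho> p
    using assms(5) unfolding dep_def by auto
  have "nrm S (\<lambda>\<sigma>. B (\<sigma> u) (\<sigma> v) * g \<sigma>)
     = (\<Sum>\<rho>\<in>(S - {u}) \<rightarrow>\<^sub>E UNIV. (\<Sum>p\<in>UNIV. (cmod (B p (\<rho> v)))\<^sup>2) * (cmod (g \<rho>))\<^sup>2)"
    by (subst S, subst nrm_insert[OF fin]) (auto simp: gi assms(3)[symmetric] norm_mult power_mult_distrib sum_distrib_right)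
  also have "\<dots> \<le> (\<Sum>\<rho>\<in>(S - {u}) \<rightarrow>\<^sub>E UNIV. c\<^sup>2 * (cmod (g \<rho>))\<^sup>2)"
    by (rule sum_mono, rule mult_right_mono[OF bnd_col[OF assms(4)]]) auto
  also have "\<dots> = c\<^sup>2 * nrm (S - {u}) g"
    by (simp add: nrm_def sum_distrib_left)
  finally show ?thesis .
qed



context
  fixes w :: "nat \<Rightarrow> 'v" and B :: "nat \<Rightarrow> 'n::finite \<Rightarrow> 'n \<Rightarrow> complex" and c :: "nat \<Rightarrow> real"
    and m :: nat and H :: real
  assumes m1: "1 \<le> m" and wm: "w m = w 0" and bndk: "\<And>k. 1 \<le> k \<Longrightarrow> k < m \<Longrightarrow> bnd (c k) (B k)"
    and H0: "0 \<le> H" and HS: "(\<Sum>p\<in>UNIV. \<Sum>q\<in>UNIV. (cmod (B 0 p q))\<^sup>2) \<le> H\<^sup>2"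
begin

abbreviation "Wa k \<equiv> w ` {..k}"
abbreviation "Wb k \<equiv> w ` {k..m}"
abbreviation "Act k \<equiv> Wa k \<inter> Wb k"
abbreviation "PP k \<sigma> \<equiv> \<Prod>j<k. B j (\<sigma> (w j)) (\<sigma> (w (Suc j)))"

lemma base_sum:
  "(\<Sum>\<sigma>\<in>Wa 1 \<rightarrow>\<^sub>E UNIV. (cmod (B 0 (\<sigma> (w 0)) (\<sigma> (w 1))))\<^sup>2) \<le> H\<^sup>2"
proof (cases "w 0 = w 1")
  case True
  have W: "Wa 1 = insert (w 0) {}" using True by (auto simp: atMost_Suc)
  have "(\<Sum>\<sigma>\<in>Wa 1 \<rightarrow>\<^sub>E UNIV. (cmod (B 0 (\<sigma> (w 0)) (\<sigma> (w 1))))\<^sup>2) = (\<Sum>p\<in>UNIV. (cmod (B 0 p p))\<^sup>2)"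
    unfolding W by (subst sum_PiE_insert) (auto simp: True)
  also have "\<dots> \<le> (\<Sum>p\<in>UNIV. \<Sum>q\<in>UNIV. (cmod (B 0 p q))\<^sup>2)"
    by (rule sum_mono, rule member_le_sum) auto
  finally show ?thesis using HS by linarith
next
  case False
  have W: "Wa 1 = insert (w 0) (insert (w 1) {})" by (auto simp: atMost_Suc)
  have "(\<Sum>\<sigma>\<in>Wa 1 \<rightarrow>\<^sub>E UNIV. (cmod (B 0 (\<sigma> (w 0)) (\<sigma> (w 1))))\<^sup>2)
     = (\<Sum>q\<in>UNIV. \<Sum>p\<in>UNIV. (cmod (B 0 p q))\<^sup>2)"
    unfolding W using False by (subst sum_PiE_insert, simp, simp, subst sum_PiE_insert) auto
  also have "\<dots> = (\<Sum>p\<in>UNIV. \<Sum>q\<in>UNIV. (cmod (B 0 p q))\<^sup>2)" by (rule sum.swap)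
  finally show ?thesis using HS by linarith
qed

lemma c_nonneg: "1 \<le> i \<Longrightarrow> i < m \<Longrightarrow> 0 \<le> c i"
  using bndk by (auto simp: bnd_def)

lemma chain_claim:
  "1 \<le> k \<Longrightarrow> k \<le> m \<Longrightarrow> dep (Act k) g \<Longrightarrow>
   cmod (\<Sum>\<sigma>\<in>Wa k \<rightarrow>\<^sub>E UNIV. PP k \<sigma> * g \<sigma>) \<le> H * (\<Prod>i\<in>{1..<k}. c i) * sqrt (nrm (Act k) g)"
proof (induction k arbitrary: g rule: nat_induct_at_least)
  case base
  have a1: "w 1 \<in> Wb 1" using m1 by auto
  have "w m \<in> Wb 1" using m1 by auto
  hence a0: "w 0 \<in> Wb 1" using wm by simp
  have "Wa 1 = {w 0, w 1}" by (auto simp: atMost_Suc)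
  hence A1: "Act 1 = Wa 1" using a0 a1 by auto
  have "(cmod (\<Sum>\<sigma>\<in>Wa 1 \<rightarrow>\<^sub>E UNIV. PP 1 \<sigma> * g \<sigma>))\<^sup>2
      \<le> (\<Sum>\<sigma>\<in>Wa 1 \<rightarrow>\<^sub>E UNIV. (cmod (PP 1 \<sigma>))\<^sup>2) * (\<Sum>\<sigma>\<in>Wa 1 \<rightarrow>\<^sub>E UNIV. (cmod (g \<sigma>))\<^sup>2)"
    by (rule cs_complex)
  also have "\<dots> \<le> H\<^sup>2 * nrm (Act 1) g"
    unfolding A1 nrm_def using base_sum by (auto intro!: mult_right_mono sum_nonneg)
  finally have "(cmod (\<Sum>\<sigma>\<in>Wa 1 \<rightarrow>\<^sub>E UNIV. PP 1 \<sigma> * g \<sigma>))\<^sup>2 \<le> H\<^sup>2 * nrm (Act 1) g" .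
  hence "cmod (\<Sum>\<sigma>\<in>Wa 1 \<rightarrow>\<^sub>E UNIV. PP 1 \<sigma> * g \<sigma>) \<le> sqrt (H\<^sup>2 * nrm (Act 1) g)"
    using real_le_rsqrt by blast
  also have "\<dots> = H * sqrt (nrm (Act 1) g)" using H0 by (simp add: real_sqrt_mult)
  finally show ?case by simp
next
  case (Suc k)
  note IH = Suc.IH
  have km: "k < m" using Suc.prems by simp
  have k1: "1 \<le> k" by fact
  define u where "u = w k"
  define v where "v = w (Suc k)"
  have bk: "bnd (c k) (B k)" using bndk k1 km by simp
  have ck: "0 \<le> c k" using bk by (simp add: bnd_def)
  have WS: "Wa (Suc k) = insert v (Wa k)" by (auto simp: atMost_Suc v_def)
  have WbS: "Wb k = insert u (Wb (Suc k))"
  proof -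
    have "{k..m} = insert k {Suc k..m}" using km by auto
    thus ?thesis by (simp add: u_def)
  qed
  have uA: "u \<in> Act k" using km by (auto simp: u_def)
  have vWb: "v \<in> Wb (Suc k)" using km by (auto simp: v_def)
  have finA: "finite (Act k)" by simp
  have PS: "PP (Suc k) \<sigma> = PP k \<sigma> * B k (\<sigma> u) (\<sigma> v)" for \<sigma>
    by (simp add: u_def v_def)
  have key: "\<exists>h. dep (Act k) h \<and>
      (\<Sum>\<sigma>\<in>Wa (Suc k) \<rightarrow>\<^sub>E UNIV. PP (Suc k) \<sigma> * g \<sigma>) = (\<Sum>\<sigma>\<in>Wa k \<rightarrow>\<^sub>E UNIV. PP k \<sigma> * h \<sigma>)
      \<and> nrm (Act k) h \<le> (c k)\<^sup>2 * nrm (Act (Suc k)) g"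
  proof (cases "v \<in> Wa k")
    case True
    define h where "h \<sigma> = B k (\<sigma> u) (\<sigma> v) * g \<sigma>" for \<sigma>
    have W: "Wa (Suc k) = Wa k" using WS True by auto
    have vA: "v \<in> Act k" using True vWb WbS by auto
    have sub: "Act (Suc k) \<subseteq> Act k" using W WbS by auto
    have dh: "dep (Act k) h" unfolding dep_def h_def
    proof (intro allI impI)
      fix \<sigma> \<tau> :: "'v \<Rightarrow> 'n" assume a: "\<forall>x\<in>Act k. \<sigma> x = \<tau> x"
      hence "g \<sigma> = g \<tau>" using Suc.prems(2) sub unfolding dep_def by blast
      moreover have "\<sigma> u = \<tau> u" "\<sigma> v = \<tau> v" using a uA vA by auto
      ultimately show "B k (\<sigma> u) (\<sigma> v) * g \<sigma> = B k (\<tau> u) (\<tau> v) * g \<tau>" by simp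
    qed
    have eq: "(\<Sum>\<sigma>\<in>Wa (Suc k) \<rightarrow>\<^sub>E UNIV. PP (Suc k) \<sigma> * g \<sigma>) = (\<Sum>\<sigma>\<in>Wa k \<rightarrow>\<^sub>E UNIV. PP k \<sigma> * h \<sigma>)"
      unfolding W PS h_def by (simp add: mult_ac)
    have nr: "nrm (Act k) h \<le> (c k)\<^sup>2 * nrm (Act (Suc k)) g"
    proof (cases "u \<in> Wb (Suc k)")
      case True
      hence "Act (Suc k) = Act k" using W WbS by auto
      thus ?thesis unfolding h_def using step_O1[OF bk] by simp
    next
      case False
      hence A: "Act (Suc k) = Act k - {u}" using W WbS by auto
      have uv: "u \<noteq> v" using False vWb by auto
      show ?thesis unfolding h_def A
        by (rule step_O2[OF finA uA uv bk]) (use Suc.prems(2) A in simp)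
    qed
    show ?thesis using dh eq nr by blast
  next
    case False
    define h where "h \<sigma> = (\<Sum>d\<in>UNIV. B k (\<sigma> u) d * g (\<sigma>(v:=d)))" for \<sigma>
    have uv: "u \<noteq> v" using False uA by auto
    have vA: "v \<notin> Act k" using False by auto
    have sub: "Act (Suc k) \<subseteq> insert v (Act k)" using WS WbS by auto
    have dh: "dep (Act k) h" unfolding dep_def h_def
    proof (intro allI impI)
      fix \<sigma> \<tau> :: "'v \<Rightarrow> 'n" assume a: "\<forall>x\<in>Act k. \<sigma> x = \<tau> x"
      have "g (\<sigma>(v:=d)) = g (\<tau>(v:=d))" for d
      proof -
        have "\<forall>x\<in>Act (Suc k). (\<sigma>(v:=d)) x = (\<tau>(v:=d)) x"
        proof
          fix x assume "x \<in> Act (Suc k)"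
          hence "x = v \<or> x \<in> Act k" using sub by blast
          thus "(\<sigma>(v:=d)) x = (\<tau>(v:=d)) x" using a by auto
        qed
        thus ?thesis using Suc.prems(2) unfolding dep_def by blast
      qed
      moreover have "\<sigma> u = \<tau> u" using a uA by auto
      ultimately show "(\<Sum>d\<in>UNIV. B k (\<sigma> u) d * g (\<sigma>(v:=d))) = (\<Sum>d\<in>UNIV. B k (\<tau> u) d * g (\<tau>(v:=d)))"
        by simp
    qed
    have PPv: "PP k (\<sigma>(v:=d)) = PP k \<sigma>" for \<sigma> d
    proof (rule prod.cong[OF refl])
      fix j assume "j \<in> {..<k}"
      hence "w j \<noteq> v" "w (Suc j) \<noteq> v" using False by (auto simp: image_iff)
      thus "B j ((\<sigma>(v:=d)) (w j)) ((\<sigma>(v:=d)) (w (Suc j))) = B j (\<sigma> (w j)) (\<sigma> (w (Suc j)))" by simp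
    qed
    have eq: "(\<Sum>\<sigma>\<in>Wa (Suc k) \<rightarrow>\<^sub>E UNIV. PP (Suc k) \<sigma> * g \<sigma>) = (\<Sum>\<sigma>\<in>Wa k \<rightarrow>\<^sub>E UNIV. PP k \<sigma> * h \<sigma>)"
      unfolding WS
      apply (subst sum_PiE_insert)
        apply simp
       apply (use False in simp)
      apply (rule sum.cong[OF refl])
      apply (unfold PS h_def)
      apply (simp only: PPv)
      apply (simp add: uv sum_distrib_left mult_ac)
      done
    have nr: "nrm (Act k) h \<le> (c k)\<^sup>2 * nrm (Act (Suc k)) g"
    proof (cases "u \<in> Wb (Suc k)")
      case True
      hence A: "Act (Suc k) = insert v (Act k)" using WS WbS vWb by auto
      show ?thesis unfolding h_def A by (rule step_N1[OF finA vA bk])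
    next
      case False
      hence A: "Act (Suc k) = insert v (Act k - {u})" using WS WbS vWb by auto
      show ?thesis unfolding h_def A
        by (rule step_N2[OF finA uA vA bk]) (use Suc.prems(2) A in simp)
    qed
    show ?thesis using dh eq nr by blast
  qed
  then obtain h where dh: "dep (Act k) h"
    and eq: "(\<Sum>\<sigma>\<in>Wa (Suc k) \<rightarrow>\<^sub>E UNIV. PP (Suc k) \<sigma> * g \<sigma>) = (\<Sum>\<sigma>\<in>Wa k \<rightarrow>\<^sub>E UNIV. PP k \<sigma> * h \<sigma>)"
    and nr: "nrm (Act k) h \<le> (c k)\<^sup>2 * nrm (Act (Suc k)) g" by blast
  have C0: "0 \<le> H * (\<Prod>i\<in>{1..<k}. c i)"
    using H0 c_nonneg km by (auto intro!: prod_nonneg mult_nonneg_nonneg)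
  have "cmod (\<Sum>\<sigma>\<in>Wa (Suc k) \<rightarrow>\<^sub>E UNIV. PP (Suc k) \<sigma> * g \<sigma>) \<le> H * (\<Prod>i\<in>{1..<k}. c i) * sqrt (nrm (Act k) h)"
    unfolding eq using IH[OF _ dh] km by simp
  also have "\<dots> \<le> H * (\<Prod>i\<in>{1..<k}. c i) * sqrt ((c k)\<^sup>2 * nrm (Act (Suc k)) g)"
    by (rule mult_left_mono[OF _ C0]) (use nr in simp)
  also have "\<dots> = H * (\<Prod>i\<in>{1..<Suc k}. c i) * sqrt (nrm (Act (Suc k)) g)"
    using ck k1 by (simp add: real_sqrt_mult prod.atLeastLessThan_Suc mult_ac)
  finally show ?case .
qed

lemma chain_final:
  "cmod (\<Sum>\<sigma>\<in>Wa m \<rightarrow>\<^sub>E UNIV. PP m \<sigma>) \<le> H * (\<Prod>i\<in>{1..<m}. c i) * sqrt (CARD('n))"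
proof -
  have A: "Act m = {w 0}" using wm by auto
  have d: "dep (Act m) (\<lambda>_. 1)" by (simp add: dep_def)
  have "nrm (Act m) (\<lambda>_::'v \<Rightarrow> 'n. 1) = CARD('n)"
    unfolding A nrm_def by (simp add: card_PiE)
  thus ?thesis using chain_claim[OF m1 le_refl d] by simp
qed

end


lemma norm_vec_sq: "(norm (x::complex^'n))\<^sup>2 = (\<Sum>j\<in>UNIV. (cmod (x$j))\<^sup>2)"
  unfolding norm_vec_def L2_set_def by (simp add: sum_nonneg)

lemma opnorm_bnd: "bnd (opnorm M) (\<lambda>p q. M$p$q)"
  unfolding bnd_def
proof (intro conjI allI)
  have bl: "bounded_linear (\<lambda>x. M *v x)" by simp
  show "0 \<le> opnorm M" unfolding opnorm_def by (rule onorm_pos_le[OF bl])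
  fix x :: "'a \<Rightarrow> complex"
  define xv where "xv = (\<chi> q. x q)"
  have "norm (M *v xv) \<le> opnorm M * norm xv" unfolding opnorm_def by (rule onorm[OF bl])
  hence "(norm (M *v xv))\<^sup>2 \<le> (opnorm M * norm xv)\<^sup>2" by (simp add: power_mono)
  thus "(\<Sum>p\<in>UNIV. (cmod (\<Sum>q\<in>UNIV. M $ p $ q * x q))\<^sup>2) \<le> (opnorm M)\<^sup>2 * (\<Sum>q\<in>UNIV. (cmod (x q))\<^sup>2)"
    unfolding power_mult_distrib norm_vec_sq by (simp add: xv_def matrix_vector_mult_def)
qed

definition HS :: "('n::finite \<Rightarrow> 'n \<Rightarrow> complex) \<Rightarrow> real" where
  "HS B = (\<Sum>p\<in>UNIV. \<Sum>q\<in>UNIV. (cmod (B p q))\<^sup>2)"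

lemma HS_transpose: "HS (\<lambda>p q. B q p) = HS B"
  unfolding HS_def by (rule sum.swap)

lemma HS_card:
  fixes B :: "'n::finite \<Rightarrow> 'n \<Rightarrow> complex" and c :: real
  assumes "bnd c B" shows "HS B \<le> real CARD('n) * c\<^sup>2"
proof -
  have "HS B = (\<Sum>q\<in>UNIV. \<Sum>p\<in>UNIV. (cmod (B p q))\<^sup>2)" unfolding HS_def by (rule sum.swap)
  also have "\<dots> \<le> (\<Sum>q\<in>(UNIV::'n set). c\<^sup>2)" by (rule sum_mono, rule bnd_col[OF assms])
  finally show ?thesis by simp
qed

lemma scale_decomp: "(a::complex) *s (x::complex^'n) = Re a *\<^sub>R x + Im a *\<^sub>R (\<i> *s x)"
  by (simp add: vec_eq_iff complex_eq_iff)

lemma inner_re: "(x::complex^'n) \<bullet> q = Re (\<Sum>j\<in>UNIV. x$j * cnj (q$j))"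
  unfolding inner_vec_def by (simp add: Re_sum inner_complex_def)

lemma inner_im: "((- \<i>) *s (x::complex^'n)) \<bullet> q = Im (\<Sum>j\<in>UNIV. x$j * cnj (q$j))"
  unfolding inner_vec_def by (simp add: Im_sum inner_complex_def)

lemma norm_expand:
  assumes "pairwise orthogonal Q" "\<And>q. q \<in> Q \<Longrightarrow> norm q = 1" "x \<in> span Q" "finite Q"
  shows "(norm x)\<^sup>2 = (\<Sum>q\<in>Q. (x \<bullet> q)\<^sup>2)"
proof -
  have "(norm x)\<^sup>2 = x \<bullet> x" by (simp add: power2_norm_eq_inner)
  also have "\<dots> = x \<bullet> (\<Sum>q\<in>Q. (x \<bullet> q) *\<^sub>R q)" using orthonormal_basis_expand[OF assms(1,2,3,4)] by simp
  also have "\<dots> = (\<Sum>q\<in>Q. (x \<bullet> q)\<^sup>2)" by (simp add: inner_sum_right power2_eq_square)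
  finally show ?thesis .
qed

lemma HS_rank:
  fixes M :: "complex^'n^'n"
  shows "HS (\<lambda>p q. M$p$q) \<le> rank M * (opnorm M)\<^sup>2"
proof -
  define c where "c = opnorm M"
  have bM: "bnd c (\<lambda>p q. M$p$q)" unfolding c_def by (rule opnorm_bnd)
  obtain Bc where Bc: "Bc \<subseteq> rows M" "vec.independent Bc" "rows M \<subseteq> vec.span Bc" "card Bc = vec.dim (rows M)"
    using vec.basis_exists by blast
  have "rows M = range (\<lambda>i. row i M)" unfolding rows_def by auto
  hence finR: "finite (rows M)" by simp
  have finB: "finite Bc" using Bc(1) finR finite_subset by blast
  define W where "W = Bc \<union> (\<lambda>b. \<i> *s b) ` Bc"
  define S where "S = span W"
  have finW: "finite W" unfolding W_def using finB by simp
  have cardW: "card W \<le> 2 * rank M"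
  proof -
    have "card W \<le> card Bc + card ((\<lambda>b. \<i> *s b) ` Bc)" unfolding W_def by (rule card_Un_le)
    also have "\<dots> \<le> card Bc + card Bc" using card_image_le[OF finB] by simp
    finally show ?thesis using Bc(4) by (simp add: row_rank_def_gen)
  qed
  have dimS: "dim S \<le> 2 * rank M"
    using dim_le_card[of S W, OF _ finW] cardW unfolding S_def by auto
  have vsub: "vec.span Bc \<subseteq> S"
  proof
    fix x assume "x \<in> vec.span Bc"
    then obtain u where x: "x = (\<Sum>b\<in>Bc. u b *s b)" using vec.span_finite[OF finB] by auto
    have "u b *s b \<in> S" if "b \<in> Bc" for b
    proof -
      have "Re (u b) *\<^sub>R b + Im (u b) *\<^sub>R (\<i> *s b) \<in> span W"
        by (rule span_add; rule span_mul; rule span_base) (use that in \<open>auto simp: W_def\<close>)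
      thus ?thesis by (simp only: scale_decomp[of "u b" b] S_def)
    qed
    thus "x \<in> S" unfolding x S_def by (intro span_sum) auto
  qed
  have subS: "subspace S" unfolding S_def by simp
  obtain Q where Q: "Q \<subseteq> S" "pairwise orthogonal Q" "\<And>x. x \<in> Q \<Longrightarrow> norm x = 1"
      "independent Q" "card Q = dim S" "span Q = S"
    using orthonormal_basis_subspace[OF subS] by blast
  have finQ: "finite Q" using Q(4) by (simp add: independent_imp_finite)
  have rowS: "M $ p \<in> S" for p
  proof -
    have "M $ p \<in> rows M" unfolding rows_def row_def by auto
    hence "M $ p \<in> vec.span Bc" using Bc(3) by auto
    thus ?thesis using vsub by auto
  qed
  have rowS': "(- \<i>) *s (M $ p) \<in> S" for p
  proof -
    have "M $ p \<in> rows M" unfolding rows_def row_def by auto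
    hence "M $ p \<in> vec.span Bc" using Bc(3) by auto
    hence "(- \<i>) *s (M $ p) \<in> vec.span Bc" by (rule vec.span_scale)
    thus ?thesis using vsub by auto
  qed
  define z where "z p q = (\<Sum>j\<in>UNIV. M$p$j * cnj (q$j))" for p q
  have nM: "(norm ((- \<i>) *s (M $ p)))\<^sup>2 = (norm (M $ p))\<^sup>2" for p
    unfolding norm_vec_sq by (simp add: norm_mult)
  have "2 * HS (\<lambda>p q. M$p$q) = (\<Sum>p\<in>UNIV. (norm (M $ p))\<^sup>2 + (norm ((- \<i>) *s (M $ p)))\<^sup>2)"
  proof -
    have "(\<Sum>p\<in>UNIV. (norm (M $ p))\<^sup>2 + (norm ((- \<i>) *s (M $ p)))\<^sup>2) = 2 * (\<Sum>p\<in>UNIV. (norm (M $ p))\<^sup>2)"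
      by (simp only: nM) (simp add: sum_distrib_left[symmetric])
    thus ?thesis unfolding HS_def by (simp add: norm_vec_sq)
  qed
  also have "\<dots> = (\<Sum>p\<in>UNIV. \<Sum>q\<in>Q. ((M $ p) \<bullet> q)\<^sup>2 + (((- \<i>) *s (M $ p)) \<bullet> q)\<^sup>2)"
  proof -
    have e1: "(norm (M$p))\<^sup>2 = (\<Sum>q\<in>Q. ((M $ p) \<bullet> q)\<^sup>2)" for p
      using norm_expand[OF Q(2,3) _ finQ] rowS Q(6) by blast
    have e2: "(norm ((- \<i>) *s (M $ p)))\<^sup>2 = (\<Sum>q\<in>Q. (((- \<i>) *s (M $ p)) \<bullet> q)\<^sup>2)" for p
      using norm_expand[OF Q(2,3) _ finQ] rowS' Q(6) by blast
    show ?thesis by (simp only: e1 e2 sum.distrib)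
  qed
  also have "\<dots> = (\<Sum>q\<in>Q. \<Sum>p\<in>UNIV. (cmod (z p q))\<^sup>2)"
    by (subst sum.swap) (simp add: inner_re inner_im z_def cmod_power2)
  also have "\<dots> \<le> (\<Sum>q\<in>Q. c\<^sup>2)"
  proof (rule sum_mono)
    fix q :: "complex^'n" assume "q \<in> Q"
    have "(\<Sum>p\<in>UNIV. (cmod (z p q))\<^sup>2) \<le> c\<^sup>2 * (\<Sum>j\<in>UNIV. (cmod (cnj (q$j)))\<^sup>2)"
      unfolding z_def using conjunct2[OF bM[unfolded bnd_def], rule_format, of "\<lambda>j. cnj (q$j)"] by simp
    also have "\<dots> = c\<^sup>2 * (norm q)\<^sup>2" by (simp add: norm_vec_sq)
    finally show "(\<Sum>p\<in>UNIV. (cmod (z p q))\<^sup>2) \<le> c\<^sup>2" using Q(3)[OF \<open>q \<in> Q\<close>] by simp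
  qed
  also have "\<dots> = card Q * c\<^sup>2" by simp
  also have "\<dots> \<le> (2 * rank M) * c\<^sup>2"
    using Q(5) dimS by (intro mult_right_mono) auto
  finally show ?thesis unfolding c_def by simp
qed



definition trail :: "'e set \<Rightarrow> ('e \<Rightarrow> 'v) \<Rightarrow> ('e \<Rightarrow> 'v) \<Rightarrow> (nat \<Rightarrow> 'v) \<Rightarrow> (nat \<Rightarrow> 'e) \<Rightarrow> nat \<Rightarrow> bool" where
  "trail E src tgt w es m \<longleftrightarrow> inj_on es {..<m} \<and> es ` {..<m} \<subseteq> E \<and>
     (\<forall>k<m. (src (es k) = w k \<and> tgt (es k) = w (Suc k)) \<or> (src (es k) = w (Suc k) \<and> tgt (es k) = w k))"

lemma trail_inj: "trail E src tgt w es m \<Longrightarrow> inj_on es {..<m}"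
  by (simp add: trail_def)

lemma trail_sub: "trail E src tgt w es m \<Longrightarrow> es ` {..<m} \<subseteq> E"
  by (simp add: trail_def)

lemma trail_orient: "trail E src tgt w es m \<Longrightarrow> k < m \<Longrightarrow>
    (src (es k) = w k \<and> tgt (es k) = w (Suc k)) \<or> (src (es k) = w (Suc k) \<and> tgt (es k) = w k)"
  by (simp add: trail_def)

definition ends :: "('e \<Rightarrow> 'v) \<Rightarrow> ('e \<Rightarrow> 'v) \<Rightarrow> 'e \<Rightarrow> 'v \<Rightarrow> nat" where
  "ends src tgt e v = (if v = src e then 1 else 0) + (if v = tgt e then 1 else 0)"

lemma mod_inj_aux: "(a + j) mod m = (b + j) mod (m::nat) \<Longrightarrow> a < m \<Longrightarrow> b < m \<Longrightarrow> a = b"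
proof -
  have *: "x \<le> y \<Longrightarrow> (y + j) mod m = (x + j) mod m \<Longrightarrow> y < m \<Longrightarrow> x = y" for x y :: nat
  proof -
    assume a: "x \<le> y" "(y + j) mod m = (x + j) mod m" "y < m"
    hence "m dvd (y + j) - (x + j)" using mod_eq_dvd_iff_nat by simp
    hence "m dvd y - x" by simp
    moreover have "y - x < m" using a by simp
    ultimately have "y - x = 0"
    proof (rule_tac ccontr)
      assume "m dvd y - x" "y - x < m" "y - x \<noteq> 0"
      hence "0 < y - x" by simp
      thus False using nat_dvd_not_less[OF _ \<open>y - x < m\<close>] \<open>m dvd y - x\<close> by blast
    qed
    thus "x = y" using a by simp
  qed
  assume "(a + j) mod m = (b + j) mod m" "a < m" "b < m"
  thus "a = b" using *[of a b] *[of b a] by (cases "a \<le> b") auto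
qed

lemma trail_extend:
  assumes "trail E src tgt w es m" "e \<in> E" "e \<notin> es ` {..<m}" "src e = w m \<or> tgt e = w m"
  shows "trail E src tgt (w(Suc m := (if src e = w m then tgt e else src e))) (es(m := e)) (Suc m)"
  unfolding trail_def
proof (intro conjI allI impI)
  show "inj_on (es(m := e)) {..<Suc m}"
    using assms(1,3) unfolding trail_def inj_on_def by (auto simp: less_Suc_eq) 
  show "(es(m := e)) ` {..<Suc m} \<subseteq> E"
    using assms(1,2) unfolding trail_def by (auto simp: less_Suc_eq)
  fix k assume k: "k < Suc m"
  show "src ((es(m := e)) k) = (w(Suc m := (if src e = w m then tgt e else src e))) k \<and>
        tgt ((es(m := e)) k) = (w(Suc m := (if src e = w m then tgt e else src e))) (Suc k) \<or>
        src ((es(m := e)) k) = (w(Suc m := (if src e = w m then tgt e else src e))) (Suc k) \<and>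
        tgt ((es(m := e)) k) = (w(Suc m := (if src e = w m then tgt e else src e))) k"
  proof (cases "k = m")
    case True thus ?thesis using assms(4) by auto
  next
    case False
    hence "k < m" using k by simp
    have eqs: "(es(m := e)) k = es k" "(w(Suc m := (if src e = w m then tgt e else src e))) k = w k"
      "(w(Suc m := (if src e = w m then tgt e else src e))) (Suc k) = w (Suc k)" using \<open>k < m\<close> by auto
    show ?thesis unfolding eqs by (rule trail_orient[OF assms(1) \<open>k < m\<close>])
  qed
qed

lemma trail_parity:
  assumes "trail E src tgt w es m" "k \<le> m"
  shows "even ((\<Sum>j<k. ends src tgt (es j) v) + (if v = w 0 then 1 else 0) + (if v = w k then 1 else 0))"
  using assms(2)
proof (induction k)
  case 0 thus ?case by simp
next
  case (Suc k)
  have o: "(src (es k) = w k \<and> tgt (es k) = w (Suc k)) \<or> (src (es k) = w (Suc k) \<and> tgt (es k) = w k)"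
  proof -
    have km: "k < m" using Suc.prems by simp
    show ?thesis by (rule trail_orient[OF assms(1) km])
  qed
  have "ends src tgt (es k) v = (if v = w k then 1 else 0) + (if v = w (Suc k) then 1 else 0)"
    using o
  proof
    assume "src (es k) = w k \<and> tgt (es k) = w (Suc k)"
    thus ?thesis unfolding ends_def by simp
  next
    assume "src (es k) = w (Suc k) \<and> tgt (es k) = w k"
    thus ?thesis unfolding ends_def by (simp add: add.commute)
  qed
  hence eqn: "(\<Sum>j<Suc k. ends src tgt (es j) v) + (if v = w 0 then 1 else 0) + (if v = w (Suc k) then 1 else 0)
      = ((\<Sum>j<k. ends src tgt (es j) v) + (if v = w 0 then 1 else 0) + (if v = w k then 1 else 0))
        + 2 * (if v = w (Suc k) then 1 else 0)" by simp
  have ih: "even ((\<Sum>j<k. ends src tgt (es j) v) + (if v = w 0 then 1 else 0) + (if v = w k then 1 else 0))"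
    using Suc.IH Suc.prems by simp
  have gen: "\<And>X c::nat. even X \<Longrightarrow> even (X + 2 * c)" by simp
  show ?case unfolding eqn by (rule gen[OF ih])
qed

lemma trail_rotate:
  assumes "trail E src tgt w es m" "w m = w 0" "j < m"
  shows "trail E src tgt (\<lambda>k. w ((k + j) mod m)) (\<lambda>k. es ((k + j) mod m)) m"
    and "(\<lambda>k. es ((k + j) mod m)) ` {..<m} = es ` {..<m}"
proof -
  have m0: "0 < m" using assms(3) by simp
  have injr: "inj_on (\<lambda>k. (k + j) mod m) {..<m}"
  proof (rule inj_onI)
    fix a b assume ab: "a \<in> {..<m}" "b \<in> {..<m}" "(a + j) mod m = (b + j) mod m"
    have "a < m" "b < m" using ab(1,2) by simp_all
    thus "a = b" by (rule mod_inj_aux[OF ab(3)])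
  qed
  have imr: "(\<lambda>k. (k + j) mod m) ` {..<m} = {..<m}"
  proof (rule endo_inj_surj)
    show "(\<lambda>k. (k + j) mod m) ` {..<m} \<subseteq> {..<m}" using m0 by auto
  qed (use injr in simp_all)
  show im: "(\<lambda>k. es ((k + j) mod m)) ` {..<m} = es ` {..<m}"
  proof -
    have "(\<lambda>k. es ((k + j) mod m)) ` {..<m} = es ` ((\<lambda>k. (k + j) mod m) ` {..<m})"
      by (simp only: image_image)
    also have "\<dots> = es ` {..<m}" by (simp only: imr)
    finally show ?thesis .
  qed
  have inj: "inj_on (\<lambda>k. es ((k + j) mod m)) {..<m}"
  proof -
    have "inj_on es ((\<lambda>k. (k + j) mod m) ` {..<m})" unfolding imr by (rule trail_inj[OF assms(1)])
    from comp_inj_on[OF injr this] show ?thesis by (simp only: o_def)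
  qed
  have nxt: "w (Suc ((k + j) mod m)) = w ((Suc k + j) mod m)" for k
  proof -
    have "(Suc k + j) mod m = (if Suc ((k + j) mod m) = m then 0 else Suc ((k + j) mod m))"
      by (simp add: mod_Suc)
    show ?thesis
    proof (cases "Suc ((k + j) mod m) = m")
      case True
      hence "(Suc k + j) mod m = 0" using \<open>(Suc k + j) mod m = _\<close> by simp
      thus ?thesis using True assms(2) by simp
    next
      case False
      hence "(Suc k + j) mod m = Suc ((k + j) mod m)" using \<open>(Suc k + j) mod m = _\<close> by simp
      thus ?thesis by simp
    qed
  qed
  show "trail E src tgt (\<lambda>k. w ((k + j) mod m)) (\<lambda>k. es ((k + j) mod m)) m"
    unfolding trail_def
  proof (intro conjI allI impI inj)
    show "(\<lambda>k. es ((k + j) mod m)) ` {..<m} \<subseteq> E" unfolding im by (rule trail_sub[OF assms(1)])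
    fix k assume "k < m"
    have "(k + j) mod m < m" using m0 by simp
    show "src (es ((k + j) mod m)) = w ((k + j) mod m) \<and> tgt (es ((k + j) mod m)) = w ((Suc k + j) mod m) \<or>
         src (es ((k + j) mod m)) = w ((Suc k + j) mod m) \<and> tgt (es ((k + j) mod m)) = w ((k + j) mod m)"
      unfolding nxt[symmetric] by (rule trail_orient[OF assms(1) \<open>(k + j) mod m < m\<close>])
  qed
qed



lemma trail_card:
  assumes "trail E src tgt w es m" "finite E"
  shows "m \<le> card E"
proof -
  have "card (es ` {..<m}) = m" using assms(1) unfolding trail_def by (simp add: card_image)
  moreover have "card (es ` {..<m}) \<le> card E" using assms unfolding trail_def by (simp add: card_mono)
  ultimately show ?thesis by simp
qed

lemma degree_split:
  assumes "trail E src tgt w es m" "finite E"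
  shows "degree E src tgt v = (\<Sum>j<m. ends src tgt (es j) v) + (\<Sum>e\<in>E - es ` {..<m}. ends src tgt e v)"
proof -
  have sub: "es ` {..<m} \<subseteq> E" and inj: "inj_on es {..<m}" using trail_sub[OF assms(1)] trail_inj[OF assms(1)] by auto
  have "degree E src tgt v = (\<Sum>e\<in>E. ends src tgt e v)" unfolding degree_def ends_def by simp
  also have "\<dots> = (\<Sum>e\<in>es ` {..<m}. ends src tgt e v) + (\<Sum>e\<in>E - es ` {..<m}. ends src tgt e v)"
    using sum.subset_diff[OF sub assms(2), of "\<lambda>e. ends src tgt e v"] by (simp add: add.commute)
  also have "(\<Sum>e\<in>es ` {..<m}. ends src tgt e v) = (\<Sum>j<m. ends src tgt (es j) v)"
    using sum.reindex[OF inj] by simp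
  finally show ?thesis .
qed

lemma trail_vertex_in:
  assumes "trail E src tgt w es m" "\<forall>e\<in>E. src e \<in> V \<and> tgt e \<in> V" "1 \<le> m" "k \<le> m"
  shows "w k \<in> V"
proof (cases "k < m")
  case True
  hence "es k \<in> E" "src (es k) = w k \<or> tgt (es k) = w k"
    using trail_orient[OF assms(1) True] trail_sub[OF assms(1)] by blast+
  thus ?thesis using assms(2) by auto
next
  case False
  hence k: "k = Suc (m - 1)" using assms(3,4) by simp
  have "m - 1 < m" using assms(3) by simp
  hence "es (m - 1) \<in> E" "src (es (m-1)) = w k \<or> tgt (es (m-1)) = w k"
    using trail_orient[OF assms(1) \<open>m - 1 < m\<close>] trail_sub[OF assms(1)] \<open>m - 1 < m\<close> unfolding k by blast+
  thus ?thesis using assms(2) by auto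
qed

lemma euler_circuit:
  assumes finE: "finite E" and fE: "f \<in> E"
    and ends_in: "\<forall>e\<in>E. src e \<in> V \<and> tgt e \<in> V"
    and conn: "\<forall>u\<in>V. \<forall>v\<in>V. (u, v) \<in> ({(src e, tgt e) | e. e \<in> E} \<union> {(tgt e, src e) | e. e \<in> E})\<^sup>*"
    and evn: "\<forall>v\<in>V. even (degree E src tgt v)"
  shows "\<exists>w es m. trail E src tgt w es m \<and> es ` {..<m} = E \<and> w m = w 0 \<and> es 0 = f \<and> 1 \<le> m"
proof -
  define L where "L = {m. \<exists>w es. trail E src tgt w es m}"
  have Lsub: "L \<subseteq> {..card E}" unfolding L_def using trail_card[OF _ finE] by auto
  have "trail E src tgt (\<lambda>k. if k = 0 then src f else tgt f) (\<lambda>_. f) 1"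
    unfolding trail_def using fE by (auto simp: inj_on_def)
  hence L1: "1 \<in> L" unfolding L_def by blast
  have finL: "finite L" using Lsub finite_subset by blast
  define m where "m = Max L"
  have mL: "m \<in> L" unfolding m_def using finL L1 by (intro Max_in) auto
  have mmax: "\<And>m'. m' \<in> L \<Longrightarrow> m' \<le> m" unfolding m_def using finL by simp
  have m1: "1 \<le> m" using mmax[OF L1] .
  obtain w es where tr: "trail E src tgt w es m" using mL unfolding L_def by blast
  have sub: "es ` {..<m} \<subseteq> E" and inj: "inj_on es {..<m}" using trail_sub[OF tr] trail_inj[OF tr] by auto
  have noext: False if "trail E src tgt w' es' m'" "m < m'" for w' es' m'
    using mmax[of m'] that unfolding L_def by auto
  have closed: "w m = w 0"
  proof (rule ccontr)
    assume ne: "w m \<noteq> w 0"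
    define t where "t = w m"
    have tV: "t \<in> V" unfolding t_def by (rule trail_vertex_in[OF tr ends_in m1 le_refl])
    have "even ((\<Sum>j<m. ends src tgt (es j) t) + 0 + 1)"
      using trail_parity[OF tr le_refl, of t] ne by (simp add: t_def)
    moreover have "even ((\<Sum>j<m. ends src tgt (es j) t) + (\<Sum>e\<in>E - es ` {..<m}. ends src tgt e t))"
    proof -
      have "even (degree E src tgt t)" using evn tV by blast
      thus ?thesis unfolding degree_split[OF tr finE, of t] .
    qed
    ultimately have "odd (\<Sum>e\<in>E - es ` {..<m}. ends src tgt e t)" by simp
    hence "(\<Sum>e\<in>E - es ` {..<m}. ends src tgt e t) \<noteq> 0" by (intro notI) simp
    then obtain e where e: "e \<in> E - es ` {..<m}" "ends src tgt e t \<noteq> 0"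
    proof -
      have "\<not> (\<forall>e\<in>E - es ` {..<m}. ends src tgt e t = 0)"
        using sum.neutral[of "E - es ` {..<m}" "\<lambda>e. ends src tgt e t"] \<open>(\<Sum>e\<in>E - es ` {..<m}. ends src tgt e t) \<noteq> 0\<close> by blast
      thus ?thesis using that by blast
    qed
    have "src e = w m \<or> tgt e = w m" using e(2) unfolding ends_def t_def by (auto split: if_splits)
    from trail_extend[OF tr _ _ this] e(1) noext show False by blast
  qed
  have cover: "es ` {..<m} = E"
  proof (rule ccontr)
    assume "es ` {..<m} \<noteq> E"
    then obtain e' where e': "e' \<in> E" "e' \<notin> es ` {..<m}" using sub by blast
    have "\<exists>j\<le>m. \<exists>e\<in>E - es ` {..<m}. src e = w j \<or> tgt e = w j"
    proof (rule ccontr)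
      assume nt: "\<not> ?thesis"
      have reach: "y \<in> w ` {..m}" if "(w 0, y) \<in> ({(src e, tgt e) | e. e \<in> E} \<union> {(tgt e, src e) | e. e \<in> E})\<^sup>*" for y
        using that
      proof (induction rule: rtrancl_induct)
        case base thus ?case by auto
      next
        case (step y z)
        then obtain e where e: "e \<in> E" "(y = src e \<and> z = tgt e) \<or> (y = tgt e \<and> z = src e)" by blast
        show ?case
        proof (cases "e \<in> es ` {..<m}")
          case True
          then obtain k where k: "k < m" "e = es k" by auto
          hence "z = w k \<or> z = w (Suc k)" using trail_orient[OF tr k(1)] e(2) by blast
          thus ?thesis using k(1) by auto
        next
          case False
          obtain j where jj: "j \<le> m" "y = w j" using step.IH by auto
          have "src e = w j \<or> tgt e = w j" using e(2) jj(2) by auto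
          hence False using nt e(1) False jj(1) by blast
          thus ?thesis ..
        qed
      qed
      have "w 0 \<in> V" by (rule trail_vertex_in[OF tr ends_in m1]) simp
      moreover have "src e' \<in> V" using ends_in e'(1) by auto
      ultimately have "src e' \<in> w ` {..m}" using conn reach by blast
      thus False using nt e' by auto
    qed
    then obtain j e where j: "j \<le> m" "e \<in> E" "e \<notin> es ` {..<m}" "src e = w j \<or> tgt e = w j" by blast
    define j' where "j' = (if j = m then 0 else j)"
    have j': "j' < m" "w j' = w j" using j(1) m1 closed unfolding j'_def by auto
    have tr': "trail E src tgt (\<lambda>k. w ((k + j') mod m)) (\<lambda>k. es ((k + j') mod m)) m"
      and im': "(\<lambda>k. es ((k + j') mod m)) ` {..<m} = es ` {..<m}"
      using trail_rotate[OF tr closed j'(1)] by auto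
    have wm': "(\<lambda>k. w ((k + j') mod m)) m = w j" using j' by simp
    have "e \<notin> (\<lambda>k. es ((k + j') mod m)) ` {..<m}" using im' j(3) by simp
    moreover have "src e = (\<lambda>k. w ((k + j') mod m)) m \<or> tgt e = (\<lambda>k. w ((k + j') mod m)) m"
      using wm' j(4) by simp
    ultimately show False using trail_extend[OF tr' j(2)] noext by blast
  qed
  obtain j where j: "j < m" "es j = f" using cover fE by auto
  have tr': "trail E src tgt (\<lambda>k. w ((k + j) mod m)) (\<lambda>k. es ((k + j) mod m)) m"
    and im': "(\<lambda>k. es ((k + j) mod m)) ` {..<m} = es ` {..<m}"
    using trail_rotate[OF tr closed j(1)] by auto
  show ?thesis
    by (rule exI[of _ "\<lambda>k. w ((k + j) mod m)"], rule exI[of _ "\<lambda>k. es ((k + j) mod m)"], rule exI[of _ m])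
       (use tr' im' cover j m1 in simp)
qed



lemma opnorm_nonneg: "0 \<le> opnorm M"
  using opnorm_bnd[of M] by (simp add: bnd_def)

lemma key_bound:
  fixes V :: "'v set" and E :: "'e set" and src tgt :: "'e \<Rightarrow> 'v"
    and M :: "'e \<Rightarrow> complex^'n::finite^'n"
  assumes "dgraph V E src tgt"
    and "weakly_connected V E src tgt"
    and "\<forall>v\<in>V. even (degree E src tgt v)"
    and fE: "f \<in> E"
  shows "norm (graph_trace V E src tgt M)
     \<le> sqrt (HS (\<lambda>p q. M f $ p $ q)) * (\<Prod>e\<in>E - {f}. opnorm (M e)) * sqrt (CARD('n))"
proof -
  have finV: "finite V" and finE: "finite E" and ends_in: "\<forall>e\<in>E. src e \<in> V \<and> tgt e \<in> V"
    using assms(1) unfolding dgraph_def by auto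
  obtain w es m where tr: "trail E src tgt w es m" and cov: "es ` {..<m} = E" and cl: "w m = w 0"
    and f0: "es 0 = f" and m1: "1 \<le> m"
    using euler_circuit[OF finE fE ends_in assms(2)[unfolded weakly_connected_def] assms(3)] by blast
  have inj: "inj_on es {..<m}" using trail_inj[OF tr] .
  have orient: "\<And>k. k < m \<Longrightarrow> (src (es k) = w k \<and> tgt (es k) = w (Suc k)) \<or> (src (es k) = w (Suc k) \<and> tgt (es k) = w k)"
    using trail_orient[OF tr] by blast
  define B where "B k p q = (if src (es k) = w k \<and> tgt (es k) = w (Suc k) then M (es k) $ p $ q else M (es k) $ q $ p)" for k p q
  define c where "c k = opnorm (M (es k))" for k
  define H where "H = sqrt (HS (\<lambda>p q. M f $ p $ q))"
  have bndk: "bnd (c k) (B k)" for k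
  proof (cases "src (es k) = w k \<and> tgt (es k) = w (Suc k)")
    case True
    hence "B k = (\<lambda>p q. M (es k) $ p $ q)" unfolding B_def by auto
    thus ?thesis unfolding c_def using opnorm_bnd by simp
  next
    case False
    hence "B k = (\<lambda>p q. M (es k) $ q $ p)" unfolding B_def by auto
    thus ?thesis unfolding c_def using bnd_transpose[OF opnorm_bnd] by simp
  qed
  have HSnn: "0 \<le> HS (\<lambda>p q. M f $ p $ q)" unfolding HS_def by (intro sum_nonneg) simp
  have H0: "0 \<le> H" unfolding H_def using HSnn by simp
  have HSB: "(\<Sum>p\<in>UNIV. \<Sum>q\<in>UNIV. (cmod (B 0 p q))\<^sup>2) \<le> H\<^sup>2"
  proof -
    have "HS (B 0) = HS (\<lambda>p q. M f $ p $ q)"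
    proof (cases "src (es 0) = w 0 \<and> tgt (es 0) = w (Suc 0)")
      case True
      hence "B 0 = (\<lambda>p q. M f $ p $ q)" unfolding B_def f0 by auto
      thus ?thesis by simp
    next
      case False
      hence "B 0 = (\<lambda>p q. M f $ q $ p)" unfolding B_def f0 by auto
      thus ?thesis using HS_transpose[of "\<lambda>p q. M f $ p $ q"] by simp
    qed
    thus ?thesis unfolding H_def HS_def[symmetric] using HSnn by simp
  qed
  have chain: "cmod (\<Sum>\<sigma>\<in>w ` {..m} \<rightarrow>\<^sub>E UNIV. \<Prod>j<m. B j (\<sigma> (w j)) (\<sigma> (w (Suc j))))
      \<le> H * (\<Prod>i\<in>{1..<m}. c i) * sqrt (CARD('n))"
    using chain_final[where w=w and B=B and c=c and m=m and H=H, OF m1 cl bndk H0 HSB] by simp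
  have VW: "w ` {..m} = V"
  proof
    show "w ` {..m} \<subseteq> V" using trail_vertex_in[OF tr ends_in m1] by auto
    show "V \<subseteq> w ` {..m}"
    proof
      fix v assume vV: "v \<in> V"
      define R where "R = ({(src e, tgt e) | e. e \<in> E} \<union> {(tgt e, src e) | e. e \<in> E})"
      have "src f \<in> V" using ends_in fE by auto
      hence rt: "(src f, v) \<in> R\<^sup>*"
        using assms(2) vV unfolding weakly_connected_def R_def by blast
      have "\<exists>e\<in>E. src e = v \<or> tgt e = v"
      proof (cases "src f = v")
        case True thus ?thesis using fE by blast
      next
        case False
        have "\<exists>y. (y, v) \<in> R" using rt False by (cases rule: rtranclE) auto
        then obtain y where "(y, v) \<in> R" by blast
        thus ?thesis unfolding R_def by blast
      qed
      then obtain e where "e \<in> E" "src e = v \<or> tgt e = v" by blast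
      then obtain k where "k < m" "es k = e" "src (es k) = v \<or> tgt (es k) = v" using cov by auto
      hence "v = w k \<or> v = w (Suc k)" using orient by blast
      thus "v \<in> w ` {..m}" using \<open>k < m\<close> by auto
    qed
  qed
  have integrand: "(\<Prod>e\<in>E. M e $ \<sigma> (src e) $ \<sigma> (tgt e)) = (\<Prod>j<m. B j (\<sigma> (w j)) (\<sigma> (w (Suc j))))" for \<sigma> :: "'v \<Rightarrow> 'n"
  proof -
    have "(\<Prod>e\<in>E. M e $ \<sigma> (src e) $ \<sigma> (tgt e)) = (\<Prod>j<m. M (es j) $ \<sigma> (src (es j)) $ \<sigma> (tgt (es j)))"
      unfolding cov[symmetric] by (rule prod.reindex[OF inj, unfolded o_def])
    also have "\<dots> = (\<Prod>j<m. B j (\<sigma> (w j)) (\<sigma> (w (Suc j))))"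
    proof (rule prod.cong[OF refl])
      fix j assume "j \<in> {..<m}"
      hence o: "(src (es j) = w j \<and> tgt (es j) = w (Suc j)) \<or> (src (es j) = w (Suc j) \<and> tgt (es j) = w j)"
        using orient by auto
      thus "M (es j) $ \<sigma> (src (es j)) $ \<sigma> (tgt (es j)) = B j (\<sigma> (w j)) (\<sigma> (w (Suc j)))"
        unfolding B_def by auto
    qed
    finally show ?thesis .
  qed
  have prodc: "(\<Prod>i\<in>{1..<m}. c i) = (\<Prod>e\<in>E - {f}. opnorm (M e))"
  proof -
    have inj1: "inj_on es {1..<m}" using inj by (rule inj_on_subset) auto
    have "es ` {1..<m} = E - {f}"
    proof -
      have "{..<m} = insert 0 {1..<m}" using m1 by auto
      hence "E = insert f (es ` {1..<m})" using cov f0 by auto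
      moreover have "f \<notin> es ` {1..<m}"
      proof
        assume "f \<in> es ` {1..<m}"
        then obtain k where k: "k \<in> {1..<m}" "es k = es 0" using f0 by auto
        have "k = 0" by (rule inj_onD[OF inj k(2)]) (use k m1 in auto)
        thus False using k(1) by simp
      qed
      ultimately show ?thesis by auto
    qed
    thus ?thesis unfolding c_def using prod.reindex[OF inj1, of "\<lambda>e. opnorm (M e)"] by (simp add: o_def)
  qed
  have gt: "graph_trace V E src tgt M = (\<Sum>\<sigma>\<in>w ` {..m} \<rightarrow>\<^sub>E UNIV. \<Prod>j<m. B j (\<sigma> (w j)) (\<sigma> (w (Suc j))))"
    unfolding graph_trace_def VW[symmetric] integrand ..
  have "norm (graph_trace V E src tgt M) \<le> H * (\<Prod>i\<in>{1..<m}. c i) * sqrt (CARD('n))"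
    unfolding gt by (rule chain)
  thus ?thesis unfolding prodc H_def .
qed



theorem theorem7p9:
  fixes V :: "'v set" and E :: "'e set" and src tgt :: "'e \<Rightarrow> 'v"
    and M :: "'e \<Rightarrow> complex^'n::finite^'n"
  assumes "dgraph V E src tgt"
    and "weakly_connected V E src tgt"
    and "\<forall>v\<in>V. even (degree E src tgt v)"
  shows "norm (graph_trace V E src tgt M) \<le> real CARD('n) * (\<Prod>e\<in>E. opnorm (M e))
       \<and> (\<forall>f\<in>E. norm (graph_trace V E src tgt M)
           \<le> sqrt (real (rank (M f)) * real CARD('n)) * (\<Prod>e\<in>E. opnorm (M e)))"
proof -
  have finV: "finite V" and finE: "finite E" using assms(1) unfolding dgraph_def by auto
  have Pnn: "0 \<le> (\<Prod>e\<in>E - {f}. opnorm (M e))" for f by (intro prod_nonneg) (simp add: opnorm_nonneg)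
  have split: "(\<Prod>e\<in>E. opnorm (M e)) = opnorm (M f) * (\<Prod>e\<in>E - {f}. opnorm (M e))" if "f \<in> E" for f
    using prod.remove[OF finE that] by simp
  have second: "norm (graph_trace V E src tgt M) \<le> sqrt (real (rank (M f)) * real CARD('n)) * (\<Prod>e\<in>E. opnorm (M e))"
    if fE: "f \<in> E" for f
  proof -
    have "sqrt (HS (\<lambda>p q. M f $ p $ q)) \<le> sqrt (real (rank (M f)) * (opnorm (M f))\<^sup>2)"
      using HS_rank[of "M f"] by simp
    also have "\<dots> = sqrt (real (rank (M f))) * opnorm (M f)"
      by (simp add: real_sqrt_mult opnorm_nonneg)
    finally have h: "sqrt (HS (\<lambda>p q. M f $ p $ q)) \<le> sqrt (real (rank (M f))) * opnorm (M f)" .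
    have "norm (graph_trace V E src tgt M)
        \<le> sqrt (HS (\<lambda>p q. M f $ p $ q)) * (\<Prod>e\<in>E - {f}. opnorm (M e)) * sqrt (CARD('n))"
      by (rule key_bound[OF assms fE])
    also have "\<dots> \<le> sqrt (real (rank (M f))) * opnorm (M f) * (\<Prod>e\<in>E - {f}. opnorm (M e)) * sqrt (CARD('n))"
      by (intro mult_right_mono h Pnn) auto
    also have "\<dots> = sqrt (real (rank (M f)) * real CARD('n)) * (\<Prod>e\<in>E. opnorm (M e))"
      by (simp add: split[OF fE] real_sqrt_mult mult_ac)
    finally show ?thesis .
  qed
  have first: "norm (graph_trace V E src tgt M) \<le> real CARD('n) * (\<Prod>e\<in>E. opnorm (M e))"
  proof (cases "E = {}")
    case True
    have eqV: "u = v" if "u \<in> V" "v \<in> V" for u v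
      using assms(2) that True unfolding weakly_connected_def by auto
    have cV: "card V \<le> 1" using eqV card_le_Suc0_iff_eq[OF finV] by auto
    have "graph_trace V E src tgt M = of_nat (card (V \<rightarrow>\<^sub>E (UNIV :: 'n set)))"
      unfolding graph_trace_def True by simp
    also have "card (V \<rightarrow>\<^sub>E (UNIV :: 'n set)) = CARD('n) ^ card V"
      by (simp add: card_PiE finV)
    finally have gt: "graph_trace V E src tgt M = of_nat (CARD('n) ^ card V)" .
    have "CARD('n) ^ card V \<le> CARD('n)"
    proof (cases "card V = 0")
      case True thus ?thesis by simp
    next
      case False
      hence "card V = 1" using cV by simp
      thus ?thesis by simp
    qed
    hence le: "real (CARD('n) ^ card V) \<le> real CARD('n)" by linarith
    have "norm (graph_trace V E src tgt M) = real (CARD('n) ^ card V)"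
      unfolding gt by (rule norm_of_nat)
    thus ?thesis using le True by simp
  next
    case False
    then obtain f where fE: "f \<in> E" by blast
    have "sqrt (HS (\<lambda>p q. M f $ p $ q)) \<le> sqrt (real CARD('n) * (opnorm (M f))\<^sup>2)"
      using HS_card[OF opnorm_bnd[of "M f"]] by simp
    also have "\<dots> = sqrt (real CARD('n)) * opnorm (M f)"
      by (simp add: real_sqrt_mult opnorm_nonneg)
    finally have h: "sqrt (HS (\<lambda>p q. M f $ p $ q)) \<le> sqrt (real CARD('n)) * opnorm (M f)" .
    have "norm (graph_trace V E src tgt M)
        \<le> sqrt (HS (\<lambda>p q. M f $ p $ q)) * (\<Prod>e\<in>E - {f}. opnorm (M e)) * sqrt (CARD('n))"
      by (rule key_bound[OF assms fE])
    also have "\<dots> \<le> sqrt (real CARD('n)) * opnorm (M f) * (\<Prod>e\<in>E - {f}. opnorm (M e)) * sqrt (CARD('n))"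
      by (intro mult_right_mono h Pnn) auto
    also have "\<dots> = real CARD('n) * (\<Prod>e\<in>E. opnorm (M e))"
    proof -
      have "sqrt (real CARD('n)) * sqrt (real CARD('n)) = real CARD('n)" by simp
      thus ?thesis by (simp add: split[OF fE] mult_ac)
    qed
    finally show ?thesis .
  qed
  show ?thesis using first second by blast
qed


end
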